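(* Let $\mathfrak{S}_n$ be the symmetric group on $[n]$. For $\pi\in\mathfrak{S}_n$ let $c_m(\pi)$ be its number of $m$-cycles and $\mathrm{da}(\pi)=|\{i\in[n]:\pi(i)\neq\pi^{-1}(i)\}|$. Then $$\sum_{n\ge0}\sum_{\pi\in\mathfrak{S}_n} r^{c_1(\pi)}s^{c_2(\pi)}t^{\mathrm{da}(\pi)}\frac{x^n}{n!}=\frac{e^{(r-t)x+(s-t^2)x^2/2}}{1-tx}.$$
   Context: $[n]=\{1,\dots,n\}$. *)

theory Defs
  imports "HOL-Combinatorics.Permutations" "HOL-Computational_Algebra.Formal_Power_Series"
begin

definition perm_orbit :: "(nat \<Rightarrow> nat) \<Rightarrow> nat \<Rightarrow> nat set" where
  "perm_orbit p i = {(p ^^ k) i | k. True}"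

definition num_cycles :: "nat \<Rightarrow> nat \<Rightarrow> (nat \<Rightarrow> nat) \<Rightarrow> nat" where
  "num_cycles n m p = card {C. \<exists>i\<in>{1..n}. C = perm_orbit p i \<and> card C = m}"

definition da :: "nat \<Rightarrow> (nat \<Rightarrow> nat) \<Rightarrow> nat" where
  "da n p = card {i\<in>{1..n}. p i \<noteq> inv p i}"

end

theory Submission
  imports Defs "HOL-Combinatorics.Orbits"
begin

lemma orbit_same:
  assumes "permutation f" "y \<in> orbit f x"
  shows "orbit f y = orbit f x"
proof -
  have xx: "x \<in> orbit f x" by (rule permutation_self_in_orbit[OF assms(1)])
  have "x \<in> orbit f y" by (rule orbit_swap[OF xx assms(2)])
  then show ?thesis using assms(2) by (auto intro: orbit_trans)
qed

definition orbs :: "'b set \<Rightarrow> ('b \<Rightarrow> 'b) \<Rightarrow> 'b set set" where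
  "orbs S p = (\<lambda>i. orbit p i) ` S"

definition W :: "(nat \<Rightarrow> 'a::comm_ring_1) \<Rightarrow> 'b set \<Rightarrow> 'a" where
  "W g S = (\<Sum>p\<in>{p. p permutes S}. \<Prod>C\<in>orbs S p. g (card C))"

definition V :: "(nat \<Rightarrow> 'a::comm_ring_1) \<Rightarrow> (nat \<Rightarrow> 'a) \<Rightarrow> 'b set \<Rightarrow> 'b \<Rightarrow> 'a" where
  "V u g S b = (\<Sum>q\<in>{q. q permutes S}. u (card (orbit q b)) * (\<Prod>C\<in>orbs S q - {orbit q b}. g (card C)))"

lemma W_eq_V:
  assumes "finite S" "b \<in> S"
  shows "W g S = V g g S b"
  unfolding W_def V_def
proof (rule sum.cong[OF refl])
  fix q assume "q \<in> {q. q permutes S}"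
  then have q: "q permutes S" by simp
  have "orbit q b \<in> orbs S q" using assms by (simp add: orbs_def)
  moreover have "finite (orbs S q)" using assms by (simp add: orbs_def)
  ultimately show "(\<Prod>C\<in>orbs S q. g (card C)) = g (card (orbit q b)) * (\<Prod>C\<in>orbs S q - {orbit q b}. g (card C))"
    by (simp add: prod.remove)
qed

lemma fixed_case:
  assumes "finite S" "a \<notin> S" "q permutes S"
  shows "orbs (insert a S) q = insert {a} (orbs S q)" "{a} \<notin> orbs S q" "orbit q a = {a}"
proof -
  have qa: "q a = a" using assms permutes_not_in by metis
  show oa: "orbit q a = {a}" using qa orbit_eq_singleton_iff by metis
  show "orbs (insert a S) q = insert {a} (orbs S q)" using oa by (simp add: orbs_def)
  show "{a} \<notin> orbs S q"
  proof
    assume "{a} \<in> orbs S q"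
    then obtain x where "x \<in> S" "{a} = orbit q x" by (auto simp: orbs_def)
    then show False using permutes_orbit_subset[OF assms(3)] assms(2) by blast
  qed
qed

lemma step_case:
  assumes fin: "finite S" and aS: "a \<notin> S" and q: "q permutes S" and bS: "b \<in> S"
  defines "p \<equiv> transpose a b \<circ> q"
  shows "orbit p a = insert a (orbit q b)"
    "orbs (insert a S) p - {orbit p a} = orbs S q - {orbit q b}"
proof -
  have pp: "p permutes insert a S"
    unfolding p_def by (rule permutes_compose[OF permutes_subset[OF q] permutes_swap_id]) (use bS in auto)
  have permp: "permutation p" using pp fin by (auto simp: permutation_permutes)
  have permq: "permutation q" using q fin by (auto simp: permutation_permutes)
  have qsub: "orbit q x \<subseteq> S" if "x \<in> S" for x using permutes_orbit_subset[OF q that] .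
  have qS: "q y \<in> S" if "y \<in> S" for y using q that by (simp add: permutes_in_image)
  have qa: "q a = a" using q aS permutes_not_in by metis
  have pa: "p a = b" by (simp add: p_def qa)
  have pval: "p y = q y" if "y \<in> S" "q y \<noteq> b" for y
    using that qS aS by (auto simp: p_def transpose_def)
  have pb: "p y = a" if "q y = b" for y using that by (simp add: p_def)
  have bb: "b \<in> orbit q b" using permutation_self_in_orbit[OF permq] .
  have aa: "a \<in> orbit p a" using permutation_self_in_orbit[OF permp] .
  have sub1: "orbit p a \<subseteq> insert a (orbit q b)"
  proof
    fix y assume "y \<in> orbit p a"
    then show "y \<in> insert a (orbit q b)"
    proof induction
      case base then show ?case using pa bb by simp
    next
      case (step y)
      have "y = a \<or> y \<in> orbit q b" using step by simp
      then show ?case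
      proof
        assume "y = a" then show ?thesis using pa bb by simp
      next
        assume yq: "y \<in> orbit q b"
        then have yS: "y \<in> S" using qsub bS by blast
        show ?thesis
        proof (cases "q y = b")
          case True then show ?thesis using pb by simp
        next
          case False then show ?thesis using pval[OF yS False] yq by (auto intro: orbit.step)
        qed
      qed
    qed
  qed
  have bpa: "b \<in> orbit p a" using pa orbit.base by metis
  have cl: "q y \<in> orbit p a" if "y \<in> orbit p a" "y \<in> S" for y
  proof (cases "q y = b")
    case True then show ?thesis using bpa by simp
  next
    case False then show ?thesis using pval[OF that(2) False] that(1) by (metis orbit.step)
  qed
  have sub2: "orbit q b \<subseteq> orbit p a"
  proof
    fix y assume "y \<in> orbit q b"
    then show "y \<in> orbit p a"
    proof induction
      case base then show ?case using cl[OF bpa bS] .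
    next
      case (step y)
      then have "y \<in> S" using qsub bS by blast
      then show ?case using cl step by blast
    qed
  qed
  show opa: "orbit p a = insert a (orbit q b)" using sub1 sub2 aa by blast
  have other: "orbit p y = orbit q y" if yS: "y \<in> S" and ny: "y \<notin> orbit q b" for y
  proof -
    have "orbit p y = orbit q y"
    proof (rule orbit_cong)
      show "y \<in> orbit q y" using permutation_self_in_orbit[OF permq] .
      fix z assume z: "z \<in> orbit q y"
      then have zS: "z \<in> S" using qsub yS by blast
      have "q z \<noteq> b"
      proof
        assume "q z = b"
        then have "b \<in> orbit q y" using z by (metis orbit.step)
        then have "orbit q b = orbit q y" using orbit_same[OF permq] by blast
        then show False using ny permutation_self_in_orbit[OF permq] by blast
      qed
      then show "p z = q z" using pval zS by blast
    qed
    then show ?thesis by simp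
  qed
  show "orbs (insert a S) p - {orbit p a} = orbs S q - {orbit q b}"
  proof (intro set_eqI iffI)
    fix C assume "C \<in> orbs (insert a S) p - {orbit p a}"
    then obtain y where y: "y \<in> insert a S" "C = orbit p y" "C \<noteq> orbit p a" by (auto simp: orbs_def)
    have ny: "y \<notin> orbit p a" using y orbit_same[OF permp] by blast
    then have yS: "y \<in> S" "y \<notin> orbit q b" using y(1) opa by auto
    have "C = orbit q y" using other[OF yS] y by simp
    moreover have "orbit q y \<noteq> orbit q b" using yS permutation_self_in_orbit[OF permq] by blast
    ultimately show "C \<in> orbs S q - {orbit q b}" using yS by (auto simp: orbs_def)
  next
    fix C assume "C \<in> orbs S q - {orbit q b}"
    then obtain y where y: "y \<in> S" "C = orbit q y" "C \<noteq> orbit q b" by (auto simp: orbs_def)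
    have ny: "y \<notin> orbit q b" using y orbit_same[OF permq] by metis
    have C: "C = orbit p y" using other[OF y(1) ny] y by simp
    have "y \<notin> orbit p a" using opa ny y(1) aS by auto
    then have "orbit p y \<noteq> orbit p a" using permutation_self_in_orbit[OF permp] by blast
    then show "C \<in> orbs (insert a S) p - {orbit p a}" using C y(1) by (auto simp: orbs_def)
  qed
qed

lemma V_rec:
  assumes fin: "finite S" and aS: "a \<notin> S"
  shows "V u g (insert a S) a = u 1 * W g S + (\<Sum>b\<in>S. V (u \<circ> Suc) g S b)"
proof -
  let ?f = "\<lambda>p. u (card (orbit p a)) * (\<Prod>C\<in>orbs (insert a S) p - {orbit p a}. g (card C))"
  have "V u g (insert a S) a = (\<Sum>b\<in>insert a S. \<Sum>q\<in>{p. p permutes S}. ?f (transpose a b \<circ> q))"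
    unfolding V_def by (rule sum_over_permutations_insert[OF fin aS])
  also have "\<dots> = (\<Sum>q\<in>{p. p permutes S}. ?f (transpose a a \<circ> q)) + (\<Sum>b\<in>S. \<Sum>q\<in>{p. p permutes S}. ?f (transpose a b \<circ> q))"
    using fin aS by simp
  also have "(\<Sum>q\<in>{p. p permutes S}. ?f (transpose a a \<circ> q)) = u 1 * W g S"
    unfolding W_def sum_distrib_left
  proof (rule sum.cong[OF refl])
    fix q assume "q \<in> {p. p permutes S}"
    then have q: "q permutes S" by simp
    note fc = fixed_case[OF fin aS q]
    show "?f (transpose a a \<circ> q) = u 1 * (\<Prod>C\<in>orbs S q. g (card C))"
      using fc by simp
  qed
  also have "(\<Sum>b\<in>S. \<Sum>q\<in>{p. p permutes S}. ?f (transpose a b \<circ> q)) = (\<Sum>b\<in>S. V (u \<circ> Suc) g S b)"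
  proof (rule sum.cong[OF refl])
    fix b assume bS: "b \<in> S"
    show "(\<Sum>q\<in>{p. p permutes S}. ?f (transpose a b \<circ> q)) = V (u \<circ> Suc) g S b"
      unfolding V_def
    proof (rule sum.cong[OF refl])
      fix q assume "q \<in> {p. p permutes S}"
      then have q: "q permutes S" by simp
      note sc = step_case[OF fin aS q bS]
      have "finite (orbit q b)" using permutes_orbit_subset[OF q bS] fin finite_subset by blast
      moreover have "a \<notin> orbit q b" using permutes_orbit_subset[OF q bS] aS by blast
      ultimately have "card (orbit (transpose a b \<circ> q) a) = Suc (card (orbit q b))"
        using sc(1) by simp
      then show "?f (transpose a b \<circ> q) = (u \<circ> Suc) (card (orbit q b)) * (\<Prod>C\<in>orbs S q - {orbit q b}. g (card C))"
        using sc(2) by simp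
    qed
  qed
  finally show ?thesis .
qed

lemma V_formula:
  fixes g :: "nat \<Rightarrow> 'a::field_char_0"
  shows "\<forall>(S::nat set) u b. finite S \<and> card S = Suc n \<and> b \<in> S \<longrightarrow>
     V u g S b = (\<Sum>k\<le>n. of_nat (fact n) / of_nat (fact (n-k)) * u (Suc k) * W g {1..n-k})"
proof (induction n)
  case 0
  show ?case
  proof (intro allI impI)
    fix S :: "nat set" and u b assume h: "finite S \<and> card S = Suc 0 \<and> b \<in> S"
    then have S: "S = insert b {}" by (auto simp: card_Suc_eq)
    show "V u g S b = (\<Sum>k\<le>0. of_nat (fact 0) / of_nat (fact (0-k)) * u (Suc k) * W g {1..0-k})"
      unfolding S by (subst V_rec) auto
  qed
next
  case (Suc m)
  show ?case
  proof (intro allI impI)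
    fix S :: "nat set" and u b assume h: "finite S \<and> card S = Suc (Suc m) \<and> b \<in> S"
    define S' where "S' = S - {b}"
    have S: "S = insert b S'" and bS': "b \<notin> S'" and fS': "finite S'" and cS': "card S' = Suc m"
      using h by (auto simp: S'_def)
    have WS': "W g S' = W g {1..Suc m}"
    proof -
      obtain c where c: "c \<in> S'" using cS' by (metis card.empty ex_in_conv nat.simps(3))
      have "W g S' = V g g S' c" using W_eq_V[OF fS' c] .
      also have "\<dots> = V g g {1..Suc m} 1" using Suc.IH c fS' cS' by simp
      also have "\<dots> = W g {1..Suc m}" by (rule W_eq_V[symmetric]) auto
      finally show ?thesis .
    qed
    have "V u g S b = u 1 * W g S' + (\<Sum>c\<in>S'. V (u \<circ> Suc) g S' c)"
      unfolding S by (rule V_rec[OF fS' bS'])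
    also have "(\<Sum>c\<in>S'. V (u \<circ> Suc) g S' c) = (\<Sum>c\<in>S'. (\<Sum>k\<le>m. of_nat (fact m) / of_nat (fact (m-k)) * u (Suc (Suc k)) * W g {1..m-k}))"
      using Suc.IH fS' cS' by (intro sum.cong) auto
    also have "\<dots> = of_nat (Suc m) * (\<Sum>k\<le>m. of_nat (fact m) / of_nat (fact (m-k)) * u (Suc (Suc k)) * W g {1..m-k})"
      using cS' by simp
    also have "\<dots> = (\<Sum>k\<le>m. of_nat (fact (Suc m)) / of_nat (fact (Suc m - Suc k)) * u (Suc (Suc k)) * W g {1..Suc m - Suc k})"
      unfolding sum_distrib_left by (intro sum.cong) (auto simp: fact_Suc field_simps)
    finally have "V u g S b = u 1 * W g {1..Suc m} + (\<Sum>k\<le>m. of_nat (fact (Suc m)) / of_nat (fact (Suc m - Suc k)) * u (Suc (Suc k)) * W g {1..Suc m - Suc k})"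
      by (simp only: WS')
    also have "\<dots> = (\<Sum>k\<le>Suc m. of_nat (fact (Suc m)) / of_nat (fact (Suc m - k)) * u (Suc k) * W g {1..Suc m - k})"
      by (subst sum.atMost_Suc_shift) (simp del: fact_Suc)
    finally show "V u g S b = (\<Sum>k\<le>Suc m. of_nat (fact (Suc m)) / of_nat (fact (Suc m - k)) * u (Suc k) * W g {1..Suc m - k})" .
  qed
qed

lemma fps_ode_unique:
  fixes F G D :: "'a :: field_char_0 fps"
  assumes "fps_deriv F = D * F" "fps_deriv G = D * G" "fps_nth F 0 = fps_nth G 0"
  shows "F = G"
proof -
  have "\<forall>m\<le>n. fps_nth F m = fps_nth G m" for n
  proof (induction n)
    case 0 then show ?case using assms(3) by simp
  next
    case (Suc n)
    have "fps_nth (fps_deriv F) n = fps_nth (fps_deriv G) n"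
      unfolding assms(1,2) fps_mult_nth using Suc by (intro sum.cong) auto
    then have "fps_nth F (Suc n) = fps_nth G (Suc n)" by (simp del: of_nat_Suc)
    then show ?case using Suc by (auto simp: le_Suc_eq)
  qed
  then show ?thesis by (auto simp: fps_eq_iff)
qed

lemma inv_geom:
  fixes t :: "'a :: field_char_0"
  shows "inverse (1 - fps_const t * fps_X) = Abs_fps (\<lambda>n. t ^ n)"
proof (rule fps_inverse_unique)
  show "(1 - fps_const t * fps_X) * Abs_fps (\<lambda>n. t ^ n) = 1"
  proof (rule fps_ext)
    fix n show "fps_nth ((1 - fps_const t * fps_X) * Abs_fps (\<lambda>n. t ^ n)) n = fps_nth (1::'a fps) n"
      by (cases n) (simp_all add: algebra_simps fps_mult_left_const_nth)
  qed
qed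

lemma rhs_ode:
  fixes r s t :: "'a :: field_char_0"
  defines "g \<equiv> (\<lambda>k::nat. if k = 1 then r else if k = 2 then s else t ^ k)"
  defines "R \<equiv> (fps_exp 1 oo (fps_const (r - t) * fps_X + fps_const ((s - t ^ 2) / 2) * fps_X ^ 2))
           * inverse (1 - fps_const t * fps_X)"
  shows "fps_deriv R = Abs_fps (\<lambda>k. g (Suc k)) * R" "fps_nth R 0 = 1"
proof -
  define P where "P = fps_const (r - t) * fps_X + fps_const ((s - t ^ 2) / 2) * fps_X ^ 2"
  define I where "I = inverse (1 - fps_const t * fps_X)"
  have P0: "fps_nth P 0 = 0" by (simp add: P_def)
  have I0: "fps_nth (1 - fps_const t * fps_X) 0 \<noteq> 0" by simp
  have dE: "fps_deriv (fps_exp 1 oo P) = (fps_exp 1 oo P) * fps_deriv P"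
    using fps_compose_deriv[OF P0, of "fps_exp 1"] by simp
  have dI: "fps_deriv I = fps_const t * I ^ 2"
    unfolding I_def using fps_inverse_deriv[OF I0] by simp
  have D: "Abs_fps (\<lambda>k. g (Suc k)) = fps_deriv P + fps_const t * I"
  proof (rule fps_ext)
    fix n
    show "fps_nth (Abs_fps (\<lambda>k. g (Suc k))) n = fps_nth (fps_deriv P + fps_const t * I) n"
      unfolding I_def inv_geom
      apply (cases n)
       apply (simp add: g_def P_def)
      subgoal for m by (cases m) (auto simp: g_def P_def fps_X_power_nth power2_eq_square fps_numeral_nth field_simps)
      done
  qed
  have "R = (fps_exp 1 oo P) * I" by (simp add: R_def P_def I_def)
  then show "fps_deriv R = Abs_fps (\<lambda>k. g (Suc k)) * R"
    unfolding D using dE dI by (simp add: algebra_simps power2_eq_square)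
  show "fps_nth R 0 = 1" by (simp add: R_def)
qed

lemma orbit_card12:
  assumes "permutation p"
  shows "card (orbit p i) \<in> {1,2} \<longleftrightarrow> p (p i) = i"
proof
  have fin: "finite (orbit p i)" using finite_orbit[OF permutation_self_in_orbit[OF assms]] .
  have ii: "i \<in> orbit p i" using permutation_self_in_orbit[OF assms] .
  have pi: "p i \<in> orbit p i" by (rule orbit.base)
  have ppi: "p (p i) \<in> orbit p i" using pi by (rule orbit.step)
  assume c: "card (orbit p i) \<in> {1,2}"
  show "p (p i) = i"
  proof (rule ccontr)
    assume ne: "p (p i) \<noteq> i"
    then have n1: "p i \<noteq> i" by auto
    have inj: "inj p" using bij_is_inj[OF permutation_bijective[OF assms]] .
    have n2: "p (p i) \<noteq> p i" using n1 injD[OF inj] by blast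
    have "{i, p i, p (p i)} \<subseteq> orbit p i" using ii pi ppi by auto
    then have "card {i, p i, p (p i)} \<le> card (orbit p i)" using card_mono[OF fin] by blast
    moreover have "card {i, p i, p (p i)} = 3" using ne n1 n2 by auto
    ultimately show False using c by auto
  qed
next
  assume h: "p (p i) = i"
  have sub: "orbit p i \<subseteq> {i, p i}"
  proof
    fix y assume "y \<in> orbit p i"
    then show "y \<in> {i, p i}" by induction (use h in auto)
  qed
  have "card (orbit p i) \<le> card {i, p i}" using card_mono[OF _ sub] by simp
  also have "\<dots> \<le> 2" by (simp add: card_insert_le_m1)
  finally have "card (orbit p i) \<le> 2" .
  moreover have "card (orbit p i) \<noteq> 0"
    using sub orbit_nonempty[of p i] finite_subset[OF sub] by auto
  ultimately show "card (orbit p i) \<in> {1,2}" by auto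
qed

lemma weight_eq:
  fixes r s t :: "'a :: field_char_0"
  assumes p: "p permutes {1..n}"
  defines "g \<equiv> (\<lambda>k::nat. if k = 1 then r else if k = 2 then s else t ^ k)"
  shows "r ^ num_cycles n 1 p * s ^ num_cycles n 2 p * t ^ da n p = (\<Prod>C\<in>orbs {1..n} p. g (card C))"
proof -
  define S :: "nat set" where "S = {1..n}"
  define Os where "Os = orbs S p"
  have perm: "permutation p" using p by (auto simp: permutation_permutes)
  have po: "perm_orbit p i = orbit p i" for i
    unfolding perm_orbit_def orbit_altdef_permutation[OF perm] by simp
  have finO: "finite Os" by (simp add: Os_def orbs_def S_def)
  have oS: "orbit p i \<subseteq> S" if "i \<in> S" for i using permutes_orbit_subset[OF p] that by (simp add: S_def)
  have finC: "finite C" if CO: "C \<in> Os" for C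
  proof -
    obtain i where "i \<in> S" "C = orbit p i" using CO unfolding Os_def orbs_def by blast
    then show ?thesis using finite_subset[OF oS] by (simp add: S_def)
  qed
  have nc: "num_cycles n m p = card {C\<in>Os. card C = m}" for m
  proof -
    have "{C. \<exists>i\<in>{1..n}. C = perm_orbit p i \<and> card C = m} = {C\<in>Os. card C = m}"
      unfolding po Os_def orbs_def S_def by blast
    then show ?thesis unfolding num_cycles_def by simp
  qed
  have A0: "(\<Prod>C\<in>Os. g (card C)) = (\<Prod>C\<in>Os. (if card C = 1 then r else 1) * (if card C = 2 then s else 1) * (if card C \<notin> {1,2} then t ^ card C else 1))"
    by (intro prod.cong) (auto simp: g_def)
  also have "\<dots> = (\<Prod>C\<in>Os. if card C = 1 then r else 1) * (\<Prod>C\<in>Os. if card C = 2 then s else 1) * (\<Prod>C\<in>Os. if card C \<notin> {1,2} then t ^ card C else 1)"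
    by (simp add: prod.distrib)
  finally have A: "(\<Prod>C\<in>Os. g (card C)) = (\<Prod>C\<in>Os. if card C = 1 then r else 1) * (\<Prod>C\<in>Os. if card C = 2 then s else 1) * (\<Prod>C\<in>Os. if card C \<notin> {1,2} then t ^ card C else 1)" .
  have e1: "(\<Prod>C\<in>Os. if card C = 1 then r else 1) = r ^ card {C\<in>Os. card C = 1}"
    using finO by (simp add: prod.If_cases Int_def)
  have e2: "(\<Prod>C\<in>Os. if card C = 2 then s else 1) = s ^ card {C\<in>Os. card C = 2}"
    using finO by (simp add: prod.If_cases Int_def)
  have "(\<Prod>C\<in>Os. if card C \<notin> {1,2} then t ^ card C else 1) = (\<Prod>C\<in>{C\<in>Os. card C \<notin> {1,2}}. t ^ card C)"
    using finO by (simp add: prod.If_cases Int_def)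
  also have "\<dots> = t ^ (\<Sum>C\<in>{C\<in>Os. card C \<notin> {1,2}}. card C)" by (simp add: power_sum)
  also have "(\<Sum>C\<in>{C\<in>Os. card C \<notin> {1,2}}. card C) = card (\<Union>{C\<in>Os. card C \<notin> {1,2}})"
  proof (rule card_Union_disjoint[symmetric])
    show "pairwise disjnt {C \<in> Os. card C \<notin> {1, 2}}"
    proof (unfold pairwise_def disjnt_def, intro ballI impI)
      fix C1 C2 assume C1: "C1 \<in> {C \<in> Os. card C \<notin> {1, 2}}" and C2: "C2 \<in> {C \<in> Os. card C \<notin> {1, 2}}" and ne: "C1 \<noteq> C2"
      obtain x where x: "C1 = orbit p x" using C1 unfolding Os_def orbs_def by blast
      obtain y where y: "C2 = orbit p y" using C2 unfolding Os_def orbs_def by blast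
      show "C1 \<inter> C2 = {}"
      proof (rule ccontr)
        assume "C1 \<inter> C2 \<noteq> {}"
        then obtain z where "z \<in> orbit p x" "z \<in> orbit p y" using x y by blast
        then have "orbit p x = orbit p y" using orbit_same[OF perm] by metis
        then show False using ne x y by simp
      qed
    qed
    show "\<And>A. A \<in> {C \<in> Os. card C \<notin> {1, 2}} \<Longrightarrow> finite A" using finC by blast
  qed
  also have "\<Union>{C\<in>Os. card C \<notin> {1,2}} = {i\<in>{1..n}. p i \<noteq> inv p i}"
  proof (intro set_eqI iffI)
    fix z assume "z \<in> \<Union>{C\<in>Os. card C \<notin> {1,2}}"
    then obtain C where C: "C \<in> Os" "card C \<notin> {1,2}" "z \<in> C" by blast
    then obtain i where i0: "i \<in> S" "C = orbit p i" unfolding Os_def orbs_def by blast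
    have i: "i \<in> S" "z \<in> orbit p i" "card (orbit p i) \<notin> {1,2}" using C i0 by simp_all
    have zS: "z \<in> S" using oS i by blast
    have "orbit p z = orbit p i" by (rule orbit_same[OF perm i(2)])
    then have "card (orbit p z) \<notin> {1,2}" using i(3) by simp
    then have ppz: "p (p z) \<noteq> z" using orbit_card12[OF perm, of z] by simp
    have "p z \<noteq> inv p z"
    proof
      assume "p z = inv p z"
      then have "p (p z) = p (inv p z)" by simp
      also have "\<dots> = z" by (rule permutes_inverses(1)[OF p])
      finally show False using ppz by simp
    qed
    then show "z \<in> {i\<in>{1..n}. p i \<noteq> inv p i}" using zS by (simp add: S_def)
  next
    fix z assume z: "z \<in> {i\<in>{1..n}. p i \<noteq> inv p i}"
    have "p (p z) \<noteq> z"
    proof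
      assume "p (p z) = z"
      then have "inv p z = p z" using permutes_inverses(2)[OF p, of "p z"] by simp
      then show False using z by simp
    qed
    then have "card (orbit p z) \<notin> {1,2}" using orbit_card12[OF perm, of z] by simp
    moreover have "z \<in> orbit p z" using permutation_self_in_orbit[OF perm] .
    moreover have "orbit p z \<in> Os" using z unfolding Os_def orbs_def S_def by blast
    ultimately show "z \<in> \<Union>{C\<in>Os. card C \<notin> {1,2}}" by blast
  qed
  finally have e3: "(\<Prod>C\<in>Os. if card C \<notin> {1,2} then t ^ card C else 1) = t ^ da n p"
    unfolding da_def .
  have "(\<Prod>C\<in>Os. g (card C)) = r ^ num_cycles n 1 p * s ^ num_cycles n 2 p * t ^ da n p"
    unfolding A e1 e2 e3 nc by (rule refl)
  then show ?thesis unfolding Os_def S_def by (rule sym)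
qed

theorem mainTheorem16:
  fixes r s t :: "'a :: field_char_0"
  shows "Abs_fps (\<lambda>n. (\<Sum>p\<in>{p. p permutes {1..n}}.
             r ^ num_cycles n 1 p * s ^ num_cycles n 2 p * t ^ da n p) / of_nat (fact n))
         = (fps_exp 1 oo (fps_const (r - t) * fps_X + fps_const ((s - t ^ 2) / 2) * fps_X ^ 2))
           * inverse (1 - fps_const t * fps_X)"
proof -
  define g where "g = (\<lambda>k::nat. if k = 1 then r else if k = 2 then s else t ^ k)"
  define a where "a = (\<lambda>n::nat. W g {1..n})"
  have L: "Abs_fps (\<lambda>n. (\<Sum>p\<in>{p. p permutes {1..n}}.
             r ^ num_cycles n 1 p * s ^ num_cycles n 2 p * t ^ da n p) / of_nat (fact n))
        = Abs_fps (\<lambda>n. a n / of_nat (fact n))"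
    unfolding a_def W_def g_def
    by (intro arg_cong[where f=Abs_fps] ext arg_cong2[where f="(/)"] sum.cong refl weight_eq) auto
  have rec: "a (Suc n) = (\<Sum>k\<le>n. of_nat (fact n) / of_nat (fact (n-k)) * g (Suc k) * a (n-k))" for n
  proof -
    have "a (Suc n) = V g g {1..Suc n} 1" unfolding a_def by (rule W_eq_V) auto
    also have "\<dots> = (\<Sum>k\<le>n. of_nat (fact n) / of_nat (fact (n-k)) * g (Suc k) * W g {1..n-k})"
      using V_formula[of n g] by simp
    finally show ?thesis by (simp add: a_def)
  qed
  define F where "F = Abs_fps (\<lambda>n. a n / of_nat (fact n))"
  have dF: "fps_deriv F = Abs_fps (\<lambda>k. g (Suc k)) * F"
  proof (rule fps_ext)
    fix n
    have "fps_nth (fps_deriv F) n = a (Suc n) / of_nat (fact n)"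
      by (simp add: F_def fact_Suc field_simps del: of_nat_Suc)
    also have "\<dots> = (\<Sum>k\<le>n. g (Suc k) * (a (n-k) / of_nat (fact (n-k))))"
      unfolding rec sum_divide_distrib by (intro sum.cong) auto
    also have "\<dots> = fps_nth (Abs_fps (\<lambda>k. g (Suc k)) * F) n"
      by (simp add: fps_mult_nth F_def atLeast0AtMost)
    finally show "fps_nth (fps_deriv F) n = fps_nth (Abs_fps (\<lambda>k. g (Suc k)) * F) n" .
  qed
  have F0: "fps_nth F 0 = 1"
    by (simp add: F_def a_def W_def orbs_def)
  define R where "R = (fps_exp 1 oo (fps_const (r - t) * fps_X + fps_const ((s - t ^ 2) / 2) * fps_X ^ 2))
           * inverse (1 - fps_const t * fps_X)"
  have dR: "fps_deriv R = Abs_fps (\<lambda>k. g (Suc k)) * R"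
    unfolding g_def R_def by (rule rhs_ode(1))
  have R0: "fps_nth R 0 = 1" unfolding R_def by (rule rhs_ode(2))
  show ?thesis
    unfolding L F_def[symmetric] R_def[symmetric]
    by (rule fps_ode_unique[OF dF dR]) (simp add: F0 R0)
qed

end
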